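(* Let $w\ge 1$. (a) Every permutation $\pi\in S_n$ of bandwidth $w$ (i.e. $|\pi_i-i|\le w$ for all $i$) is a product of at most $2w-1$ permutations of bandwidth $1$. (b) The bound $2w-1$ is sharp: for every $n\ge 2w$, the permutation $\sigma\in S_n$ given by $\sigma=(w+1)(w+2)\cdots(2w)\,1\,2\cdots w\,(2w+1)(2w+2)\cdots n$ in one-line notation (i.e. $\sigma_i=w+i$ for $1\le i\le w$, $\sigma_i=i-w$ for $w<i\le 2w$, $\sigma_i=i$ for $i>2w$) has bandwidth $w$ and cannot be written as a product of fewer than $2w-1$ permutations of bandwidth $1$.
   Context: A permutation $\rho\in S_n$ has bandwidth $w$ if $|\rho_i-i|\le w$ for all $i$, where $\rho_i=\rho(i)$. *)

theory Defs
  imports "HOL-Combinatorics.Permutations"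
begin

definition has_bandwidth :: "nat \<Rightarrow> nat \<Rightarrow> (nat \<Rightarrow> nat) \<Rightarrow> bool" where
  "has_bandwidth n w p \<longleftrightarrow> p permutes {1..n} \<and>
     (\<forall>i\<in>{1..n}. \<bar>int (p i) - int i\<bar> \<le> int w)"

definition prod_bw1_atmost :: "nat \<Rightarrow> nat \<Rightarrow> (nat \<Rightarrow> nat) \<Rightarrow> bool" where
  "prod_bw1_atmost n k p \<longleftrightarrow>
     (\<exists>ps. length ps \<le> k \<and> (\<forall>q\<in>set ps. has_bandwidth n 1 q) \<and> p = foldr (\<circ>) ps id)"

definition sigma_w :: "nat \<Rightarrow> nat \<Rightarrow> nat" where
  "sigma_w w i = (if 1 \<le> i \<and> i \<le> w then w + i
                  else if w < i \<and> i \<le> 2 * w then i - w else i)"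

end

theory Submission
  imports Defs
begin


definition swapf :: "(nat \<Rightarrow> bool) \<Rightarrow> nat \<Rightarrow> nat" where
  "swapf F j = (if 1 \<le> j \<and> F (j - 1) then j - 1 else if F j then Suc j else j)"

lemma swapf_invol:
  assumes adj: "\<And>i. F i \<Longrightarrow> \<not> F (Suc i)" and pos: "\<And>i. F i \<Longrightarrow> 1 \<le> i"
  shows "swapf F (swapf F j) = j"
  using adj[of "j - 1"] adj[of j] adj[of "j-2"] pos[of j] pos[of "j - 1"]
  unfolding swapf_def
  by (cases j; cases "j - 1"; auto)

lemma swapf_bw1:
  assumes adj: "\<And>i. F i \<Longrightarrow> \<not> F (Suc i)" and rng: "\<And>i. F i \<Longrightarrow> 1 \<le> i \<and> i < n"
  shows "has_bandwidth n 1 (swapf F)"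
proof -
  have inv: "\<And>j. swapf F (swapf F j) = j"
    using swapf_invol[of F] adj rng by blast
  have "swapf F permutes {1..n}"
  proof (rule inj_imp_permutes)
    show "inj_on (swapf F) {1..n}" by (metis inj_onI inv)
    show "finite {1..n}" by simp
    show "swapf F x \<in> {1..n}" if "x \<in> {1..n}" for x
      using that rng[of x] rng[of "x - 1"] unfolding swapf_def by auto
    show "swapf F x = x" if "x \<notin> {1..n}" for x
      using that rng[of x] rng[of "x - 1"] unfolding swapf_def by auto
  qed
  moreover have "\<bar>int (swapf F i) - int i\<bar> \<le> 1" for i
    unfolding swapf_def by auto
  ultimately show ?thesis unfolding has_bandwidth_def by auto
qed



definition cnt :: "(int \<Rightarrow> bool) \<Rightarrow> int \<Rightarrow> int \<Rightarrow> int" where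
  "cnt b R y = (\<Sum>j\<in>{y..R}. if b j then 1 else 0)"

lemma cnt_split: "y \<le> R \<Longrightarrow> cnt b R y = (if b y then 1 else 0) + cnt b R (y+1)"
proof -
  assume "y \<le> R"
  then have "{y..R} = insert y {y+1..R}" by auto
  then show ?thesis unfolding cnt_def by simp
qed

lemma cnt_nonneg: "0 \<le> cnt b R y"
  unfolding cnt_def by (rule sum_nonneg) auto

lemma cnt_anti: "y \<le> y' \<Longrightarrow> cnt b R y' \<le> cnt b R y"
  unfolding cnt_def by (rule sum_mono2) auto

lemma telesc:
  fixes e :: "int \<Rightarrow> int"
  shows "(\<Sum>j\<in>{y..y - 1 + int m}. e (j - 1) - e j) = e (y - 1) - e (y - 1 + int m)"
proof (induction m)
  case 0 then show ?case by simp
next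
  case (Suc m)
  have "{y..y - 1 + int (Suc m)} = insert (y + int m) {y..y - 1 + int m}" by auto
  then show ?case using Suc by (simp add: algebra_simps)
qed

lemma gate:
  fixes b :: "nat \<Rightarrow> int \<Rightarrow> bool" and F :: "nat \<Rightarrow> int \<Rightarrow> bool" and R \<phi> :: int
    and K :: nat and base :: "nat \<Rightarrow> int"
  assumes adj: "\<And>t i. F t i \<Longrightarrow> \<not> F t (i+1)"
  and dyn: "\<And>t j. b (Suc t) j = (if F t (j-1) then b t (j-1) else if F t j then b t (j+1) else b t j)"
  and no01: "\<And>t i. F t i \<Longrightarrow> b t (i+1) \<Longrightarrow> b t i"
  and actv: "\<And>t i. even (i + int t + \<phi>) \<Longrightarrow> b t i \<Longrightarrow> \<not> b t (i+1) \<Longrightarrow> F t i"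
  and ones0: "\<And>j. R < j \<Longrightarrow> b 0 j"
  and H1: "\<And>k. 1 \<le> k \<Longrightarrow> k \<le> K \<Longrightarrow> even (base k + \<phi>)"
  and H2: "\<And>k. 2 \<le> k \<Longrightarrow> k \<le> K \<Longrightarrow> base k + 2 \<le> base (k-1)"
  and H3: "\<And>k. 1 \<le> k \<Longrightarrow> k \<le> K \<Longrightarrow> int k \<le> cnt (b 0) R (min (R+1-int k) (base k))"
  shows "\<forall>k. 1 \<le> k \<longrightarrow> k \<le> K \<longrightarrow> int k \<le> cnt (b t) R (min (R + 1 - int k) (base k + int t))"
proof -
  define e where "e t i = (if F t i \<and> b t i \<and> \<not> b t (i+1) then 1 else (0::int))" for t i
  have pt: "(if b (Suc t) j then 1 else 0) = (if b t j then 1 else 0) + e t (j-1) - e t j" for t j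
    using adj[of t "j-1"] no01[of t "j-1"] no01[of t j] unfolding dyn[of t j] e_def by (auto split: if_splits)
  have ones: "R < j \<Longrightarrow> b t j" for t j
  proof (induction t arbitrary: j)
    case 0 then show ?case by (rule ones0)
  next
    case (Suc t)
    have "e t j = 0" using Suc.IH[of "j+1"] Suc.prems unfolding e_def by auto
    moreover have "e t (j - 1) \<ge> 0" unfolding e_def by auto
    ultimately show ?case using pt[of t j] Suc.IH[OF Suc.prems] by (auto split: if_splits)
  qed
  have flow: "cnt (b (Suc t)) R y = cnt (b t) R y + e t (y - 1)" if "y \<le> R + 1" for t y
  proof -
    define m where "m = nat (R - y + 1)"
    have m: "R = y - 1 + int m" using that unfolding m_def by simp
    have "cnt (b (Suc t)) R y = (\<Sum>j\<in>{y..R}. (if b t j then 1 else 0) + (e t (j-1) - e t j))"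
      unfolding cnt_def by (rule sum.cong) (auto simp: pt)
    also have "\<dots> = cnt (b t) R y + (\<Sum>j\<in>{y..R}. e t (j-1) - e t j)"
      unfolding cnt_def by (simp add: sum.distrib)
    also have "(\<Sum>j\<in>{y..R}. e t (j-1) - e t j) = e t (y - 1) - e t R"
      using telesc[of "e t" y m] m by simp
    also have "e t R = 0" using ones[of "R+1" t] unfolding e_def by auto
    finally show ?thesis by simp
  qed
  show ?thesis
  proof (induction t)
    case 0 then show ?case using H3 by simp
  next
    case (Suc t)
    show ?case
    proof (intro allI impI)
      fix k assume k1: "1 \<le> k" and kK: "k \<le> K"
      define x where "x = min (R + 1 - int k) (base k + int t)"
      have IHk: "int k \<le> cnt (b t) R x" using Suc.IH k1 kK unfolding x_def by auto
      have xle: "x \<le> R + 1" using k1 unfolding x_def by auto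
      have e0: "e t (x - 1) \<ge> 0" unfolding e_def by auto
      show "int k \<le> cnt (b (Suc t)) R (min (R + 1 - int k) (base k + int (Suc t)))"
      proof (cases "R + 1 - int k \<le> base k + int t")
        case True
        then have "min (R + 1 - int k) (base k + int (Suc t)) = x" unfolding x_def by auto
        then show ?thesis using flow[OF xle, of t] IHk e0 by simp
      next
        case False
        then have xb: "x = base k + int t" and xlt: "x < R + 1 - int k" unfolding x_def by auto
        have mn: "min (R + 1 - int k) (base k + int (Suc t)) = x + 1" using False xb by auto
        have fl: "cnt (b (Suc t)) R (x+1) = cnt (b t) R (x+1) + e t x"
          using flow[of "x+1" t] xlt k1 by simp
        have ex0: "e t x \<ge> 0" unfolding e_def by auto
        show ?thesis
        proof (cases "int k \<le> cnt (b t) R (x+1)")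
          case True then show ?thesis using mn fl ex0 by simp
        next
          case False
          have xR: "x \<le> R" using xlt k1 by simp
          have sp: "cnt (b t) R x = (if b t x then 1 else 0) + cnt (b t) R (x+1)"
            using cnt_split[OF xR] by simp
          have bx: "b t x" and cx1: "cnt (b t) R (x+1) = int k - 1"
            using sp IHk False by (auto split: if_splits)
          have x1R: "x + 1 \<le> R" using xlt k1 by simp
          have sp1: "cnt (b t) R (x+1) = (if b t (x+1) then 1 else 0) + cnt (b t) R (x+2)"
            using cnt_split[OF x1R] by (simp add: add.assoc)
          have nb1: "\<not> b t (x+1)"
          proof
            assume bx1: "b t (x+1)"
            show False
            proof (cases "k = 1")
              case True
              then show False using cx1 sp1 bx1 cnt_nonneg[of "b t" R "x+2"] by simp
            next
              case False
              then have k2: "2 \<le> k" using k1 by simp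
              have IH2: "int (k-1) \<le> cnt (b t) R (min (R + 1 - int (k-1)) (base (k-1) + int t))"
              proof -
                have "1 \<le> k - 1" "k - 1 \<le> K" using k2 kK by auto
                then show ?thesis using Suc.IH by blast
              qed
              have "x + 2 \<le> min (R + 1 - int (k-1)) (base (k-1) + int t)"
                using H2[OF k2 kK] xb xlt k2 by auto
              then have "cnt (b t) R (min (R + 1 - int (k-1)) (base (k-1) + int t)) \<le> cnt (b t) R (x+2)"
                by (rule cnt_anti)
              then show False using IH2 cx1 sp1 bx1 k2 by simp
            qed
          qed
          have "even (x + int t + \<phi>)" using H1[OF k1 kK] xb
            by (metis add.commute add.left_commute even_add mult_2 of_nat_add)
          then have "F t x" using actv bx nb1 by blast
          then have "e t x = 1" using bx nb1 unfolding e_def by simp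
          then show ?thesis using mn fl cx1 by simp
        qed
      qed
    qed
  qed
qed


lemma gate_ones:
  fixes b :: "nat \<Rightarrow> int \<Rightarrow> bool" and F :: "nat \<Rightarrow> int \<Rightarrow> bool" and R :: int
  assumes adj: "\<And>t i. F t i \<Longrightarrow> \<not> F t (i+1)"
  and dyn: "\<And>t j. b (Suc t) j = (if F t (j-1) then b t (j-1) else if F t j then b t (j+1) else b t j)"
  and no01: "\<And>t i. F t i \<Longrightarrow> b t (i+1) \<Longrightarrow> b t i"
  and ones0: "\<And>j. R < j \<Longrightarrow> b 0 j"
  shows "R < j \<Longrightarrow> b t j"
proof (induction t arbitrary: j)
  case 0 then show ?case by (rule ones0)
next
  case (Suc t)
  have "b t (j+1)" using Suc.IH[of "j+1"] Suc.prems by simp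
  moreover have "b t j" using Suc.IH[OF Suc.prems] .
  ultimately show ?case using adj[of t "j-1"] no01[of t "j-1"] unfolding dyn[of t j] by auto
qed

lemma cnt_pos: "y \<le> j \<Longrightarrow> j \<le> R \<Longrightarrow> b j \<Longrightarrow> 1 \<le> cnt b R y"
proof -
  assume a: "y \<le> j" "j \<le> R" "b j"
  have "(if b j then 1 else 0) \<le> (\<Sum>j\<in>{y..R}. if b j then 1 else (0::int))"
    by (rule member_le_sum) (use a in auto)
  then show ?thesis unfolding cnt_def using a by simp
qed

lemma cnt_full:
  assumes "int K \<le> cnt b R (R + 1 - int K)" "R + 1 - int K \<le> j" "j \<le> R"
  shows "b j"
proof (rule ccontr)
  assume nb: "\<not> b j"
  let ?A = "{R + 1 - int K..R}"
  have "cnt b R (R + 1 - int K) = (\<Sum>i\<in>?A - {j}. if b i then 1 else 0) + (if b j then 1 else (0::int))"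
    unfolding cnt_def using assms(2,3) by (subst sum.remove[of _ j]) auto
  also have "\<dots> \<le> int (card (?A - {j}))"
  proof -
    have "(\<Sum>i\<in>?A - {j}. if b i then 1 else (0::int)) \<le> (\<Sum>i\<in>?A - {j}. (1::int))"
      by (rule sum_mono) auto
    then show ?thesis using nb by simp
  qed
  also have "card (?A - {j}) = card ?A - 1" using assms(2,3) by simp
  finally have "cnt b R (R + 1 - int K) \<le> int (card ?A - 1)" .
  moreover have "card ?A = K" by simp
  ultimately show False using assms(1) assms(2,3) by linarith
qed



locale oets =
  fixes n :: nat and act :: "nat \<Rightarrow> nat \<Rightarrow> bool" and p :: "nat \<Rightarrow> nat"
  assumes act_rng: "\<And>t i. act t i \<Longrightarrow> 1 \<le> i \<and> i < n"
    and act_adj: "\<And>t i. act t i \<Longrightarrow> \<not> act t (Suc i)"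
    and pperm: "p permutes {1..n}"
begin

primrec st :: "nat \<Rightarrow> nat \<Rightarrow> nat" where
  "st 0 = p"
| "st (Suc t) = st t \<circ> swapf (\<lambda>i. act t i \<and> st t (Suc i) < st t i)"

declare st.simps(2)[simp del]

definition fire :: "nat \<Rightarrow> nat \<Rightarrow> bool" where
  "fire t i = (act t i \<and> st t (Suc i) < st t i)"

lemma st_Suc': "st (Suc t) = st t \<circ> swapf (fire t)"
  unfolding fire_def by (simp add: st.simps(2))

lemma fire_adj: "fire t i \<Longrightarrow> \<not> fire t (Suc i)"
  unfolding fire_def using act_adj by blast

lemma fire_rng: "fire t i \<Longrightarrow> 1 \<le> i \<and> i < n"
  unfolding fire_def using act_rng by blast

lemma tau_bw1: "has_bandwidth n 1 (swapf (fire t))"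
  by (rule swapf_bw1) (use fire_adj fire_rng in auto)

lemma tau_invol: "swapf (fire t) (swapf (fire t) j) = j"
  by (rule swapf_invol) (use fire_adj fire_rng in auto)

lemma st_perm: "st t permutes {1..n}"
proof (induction t)
  case 0 then show ?case using pperm by simp
next
  case (Suc t)
  have "swapf (fire t) permutes {1..n}" using tau_bw1 unfolding has_bandwidth_def by blast
  then show ?case using Suc permutes_compose unfolding st_Suc' by blast
qed

lemma st_prod: "st T \<circ> foldr (\<circ>) (rev (map (\<lambda>t. swapf (fire t)) [0..<T])) id = p"
proof (induction T)
  case 0 then show ?case by simp
next
  case (Suc T)
  define P where "P = foldr (\<circ>) (rev (map (\<lambda>t. swapf (fire t)) [0..<T])) id"
  have ii: "swapf (fire T) \<circ> swapf (fire T) = id" using tau_invol by (simp add: fun_eq_iff)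
  have "foldr (\<circ>) (rev (map (\<lambda>t. swapf (fire t)) [0..<Suc T])) id = swapf (fire T) \<circ> P"
    unfolding P_def by simp
  then have "st (Suc T) \<circ> foldr (\<circ>) (rev (map (\<lambda>t. swapf (fire t)) [0..<Suc T])) id
      = st T \<circ> (swapf (fire T) \<circ> swapf (fire T)) \<circ> P"
    by (simp only: st_Suc' o_assoc)
  also have "\<dots> = st T \<circ> P" using ii by simp
  also have "\<dots> = p" using Suc.IH unfolding P_def .
  finally show ?case .
qed

lemma st_id_prod: "st T = id \<Longrightarrow> prod_bw1_atmost n T p"
  unfolding prod_bw1_atmost_def
  by (rule exI[of _ "rev (map (\<lambda>t. swapf (fire t)) [0..<T])"]) (use st_prod[of T] tau_bw1 in auto)

definition img :: "nat \<Rightarrow> nat \<Rightarrow> int \<Rightarrow> bool" where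
  "img c t j = (1 \<le> j \<and> c < st t (nat j))"

definition ifire :: "nat \<Rightarrow> int \<Rightarrow> bool" where
  "ifire t i = (1 \<le> i \<and> fire t (nat i))"

lemma ifire_adj: "ifire t i \<Longrightarrow> \<not> ifire t (i+1)"
proof -
  assume a: "ifire t i"
  then have "nat (i+1) = Suc (nat i)" unfolding ifire_def by (simp add: nat_add_distrib)
  then show ?thesis using a fire_adj[of t "nat i"] unfolding ifire_def by simp
qed

lemma img_no01: "ifire t i \<Longrightarrow> img c t (i+1) \<Longrightarrow> img c t i"
  unfolding ifire_def img_def fire_def
  by (auto simp: nat_add_distrib)

lemma img_dyn: "img c (Suc t) j = (if ifire t (j-1) then img c t (j-1) else if ifire t j then img c t (j+1) else img c t j)"
proof (cases "1 \<le> j")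
  case True
  then have j: "j = int (nat j)" by simp
  show ?thesis
  proof (cases "ifire t (j-1)")
    case True
    then have "fire t (nat j - 1)" "1 \<le> nat j - 1"
      unfolding ifire_def by (auto simp: nat_diff_distrib)
    then have "swapf (fire t) (nat j) = nat j - 1" unfolding swapf_def by auto
    then show ?thesis using True \<open>1 \<le> j\<close> unfolding img_def st_Suc' ifire_def
      by (auto simp: nat_diff_distrib)
  next
    case False
    have nf: "\<not> (1 \<le> nat j \<and> fire t (nat j - 1))"
    proof
      assume a: "1 \<le> nat j \<and> fire t (nat j - 1)"
      then have "1 \<le> nat j - 1" using fire_rng[of t "nat j - 1"] by simp
      then have "1 \<le> j - 1" "nat (j - 1) = nat j - 1" by (simp_all add: nat_diff_distrib)
      then show False using False a unfolding ifire_def by simp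
    qed
    show ?thesis
    proof (cases "ifire t j")
      case True
      then have "fire t (nat j)" unfolding ifire_def by simp
      then have "swapf (fire t) (nat j) = Suc (nat j)" using nf unfolding swapf_def by auto
      then show ?thesis using True False \<open>1 \<le> j\<close> unfolding img_def st_Suc' ifire_def
        by (auto simp: nat_add_distrib)
    next
      case F2: False
      then have "\<not> fire t (nat j)" unfolding ifire_def using \<open>1 \<le> j\<close> by simp
      then have "swapf (fire t) (nat j) = nat j" using nf unfolding swapf_def by auto
      then show ?thesis using False F2 unfolding img_def st_Suc' by auto
    qed
  qed
next
  case False
  then show ?thesis unfolding img_def ifire_def by auto
qed

lemma perm_ge_id:
  assumes "s permutes {1..n}" and "\<And>j. 1 \<le> j \<Longrightarrow> j \<le> n \<Longrightarrow> j \<le> s j"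
  shows "s = id"
proof -
  have "\<forall>j. n - m < j \<and> j \<le> n \<longrightarrow> s j = j" for m
  proof (induction m)
    case 0 then show ?case by auto
  next
    case (Suc m)
    show ?case
    proof (intro allI impI)
      fix j assume j: "n - Suc m < j \<and> j \<le> n"
      show "s j = j"
      proof (cases "n - m < j")
        case True then show ?thesis using Suc j by auto
      next
        case False
        then have jj: "j = n - m" "1 \<le> j" using j by auto
        have sj: "j \<le> s j" using assms(2) jj j by auto
        have "s j \<in> {1..n}" using jj j permutes_in_image[OF assms(1)] by auto
        moreover have "\<not> (j < s j)"
        proof
          assume "j < s j"
          then have "s (s j) = s j" using Suc \<open>s j \<in> {1..n}\<close> jj by auto
          then have "s j = j" using permutes_inj[OF assms(1)] by (meson injD)
          then show False using \<open>j < s j\<close> by simp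
        qed
        ultimately show ?thesis using sj by simp
      qed
    qed
  qed
  from this[of n] have "\<And>j. 1 \<le> j \<Longrightarrow> j \<le> n \<Longrightarrow> s j = j" by auto
  then show ?thesis using permutes_not_in[OF assms(1)] by (auto simp: fun_eq_iff)
qed

lemma sorted_crit:
  assumes "\<And>c j. c < n \<Longrightarrow> c < j \<Longrightarrow> j \<le> n \<Longrightarrow> c < st T j"
  shows "st T = id"
proof (rule perm_ge_id[OF st_perm])
  fix j :: nat assume "1 \<le> j" "j \<le> n"
  then have "j - 1 < st T j" using assms[of "j - 1" j] by simp
  then show "j \<le> st T j" using \<open>1 \<le> j\<close> by linarith
qed

end



locale bwp =
  fixes n w :: nat and p :: "nat \<Rightarrow> nat"
  assumes pperm: "p permutes {1..n}"
    and bw: "\<And>i. i \<in> {1..n} \<Longrightarrow> \<bar>int (p i) - int i\<bar> \<le> int w"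
    and w1: "1 \<le> w"
begin

lemma pout: "i \<notin> {1..n} \<Longrightarrow> p i = i"
  using permutes_not_in[OF pperm] .

lemma pbw1: "p i \<le> i + w"
  using bw[of i] pout[of i] by (cases "i \<in> {1..n}") auto

lemma pbw2: "i \<le> p i + w"
  using bw[of i] pout[of i] by (cases "i \<in> {1..n}") auto

lemma pinj: "inj p" using permutes_inj[OF pperm] .

lemma pin: "i \<in> {1..n} \<Longrightarrow> p i \<in> {1..n}"
  using permutes_in_image[OF pperm] by simp

definition fb :: "nat \<Rightarrow> bool" where
  "fb c = (c + w \<le> n \<and> (\<forall>j. c < j \<and> j \<le> c + w \<longrightarrow> p j \<le> c))"

lemma inj_card_le:
  assumes "inj_on f A" "f ` A \<subseteq> B" "finite B"
  shows "card A \<le> card B"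
  using card_image[OF assms(1)] card_mono[OF assms(3,2)] by simp

lemma fb_props:
  assumes "fb b"
  shows "w \<le> b" "b + w \<le> n"
    "p ` {1..b-w} = {1..b-w}" "p ` {b-w<..b+w} = {b-w<..b+w}"
    "\<And>j. b < j \<Longrightarrow> j \<le> b + w \<Longrightarrow> p j \<le> b"
    "\<And>j. b - w < j \<Longrightarrow> j \<le> b \<Longrightarrow> b < p j"
proof -
  have A: "\<And>j. b < j \<Longrightarrow> j \<le> b + w \<Longrightarrow> p j \<le> b" and bn: "b + w \<le> n"
    using assms unfolding fb_def by auto
  then show "\<And>j. b < j \<Longrightarrow> j \<le> b + w \<Longrightarrow> p j \<le> b" "b + w \<le> n" by auto
  have Sr: "p ` {b<..b+w} \<subseteq> {1..b}"
  proof
    fix x assume "x \<in> p ` {b<..b+w}"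
    then obtain j where j: "j \<in> {b<..b+w}" "x = p j" by auto
    then have "p j \<in> {1..n}" using pin[of j] bn by auto
    then show "x \<in> {1..b}" using A j by auto
  qed
  have "card {b<..b+w} \<le> card {1..b}"
    by (rule inj_card_le[OF inj_on_subset[OF pinj] Sr]) auto
  then show wb: "w \<le> b" by simp
  have Sr2: "p ` {b<..b+w} \<subseteq> {b-w<..b}"
  proof
    fix x assume "x \<in> p ` {b<..b+w}"
    then obtain j where j: "j \<in> {b<..b+w}" "x = p j" by auto
    then show "x \<in> {b-w<..b}" using A[of j] pbw2[of j] wb by auto
  qed
  have Sr3: "p ` {b<..b+w} = {b-w<..b}"
  proof (rule card_subset_eq[OF _ Sr2])
    show "finite {b - w<..b}" by simp
    have "card (p ` {b<..b+w}) = card {b<..b+w}"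
      by (rule card_image[OF inj_on_subset[OF pinj]]) auto
    then show "card (p ` {b<..b+w}) = card {b-w<..b}" using wb by simp
  qed
  have L1: "p ` {1..b-w} \<subseteq> {1..b-w}"
  proof
    fix x assume "x \<in> p ` {1..b-w}"
    then obtain j where j: "j \<in> {1..b-w}" "x = p j" by auto
    have "p j \<in> {1..n}" using pin[of j] j bn by auto
    moreover have "p j \<le> b" using pbw1[of j] j wb by auto
    moreover have "p j \<notin> {b-w<..b}"
    proof
      assume "p j \<in> {b-w<..b}"
      then obtain j' where j': "j' \<in> {b<..b+w}" "p j' = p j" using Sr3 by (metis imageE)
      then have "j' = j" using injD[OF pinj] by blast
      then show False using j j' by auto
    qed
    ultimately show "x \<in> {1..b-w}" using j by auto
  qed
  show L2: "p ` {1..b-w} = {1..b-w}"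
  proof (rule card_subset_eq[OF _ L1])
    show "finite {1..b-w}" by simp
    show "card (p ` {1..b-w}) = card {1..b-w}"
      by (rule card_image[OF inj_on_subset[OF pinj]]) auto
  qed
  have M: "b < p j" if j: "b - w < j" "j \<le> b" for j
  proof -
    have "p j \<in> {1..n}" using pin[of j] j bn wb by auto
    moreover have "p j \<notin> {1..b-w}"
    proof
      assume "p j \<in> {1..b-w}"
      then obtain j' where j': "j' \<in> {1..b-w}" "p j' = p j" using L2 by (metis imageE)
      then have "j' = j" using injD[OF pinj] by blast
      then show False using j j' by auto
    qed
    moreover have "p j \<notin> {b-w<..b}"
    proof
      assume "p j \<in> {b-w<..b}"
      then obtain j' where j': "j' \<in> {b<..b+w}" "p j' = p j" using Sr3 by (metis imageE)
      then have "j' = j" using injD[OF pinj] by blast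
      then show False using j j' by auto
    qed
    ultimately show ?thesis by auto
  qed
  then show "\<And>j. b - w < j \<Longrightarrow> j \<le> b \<Longrightarrow> b < p j" by auto
  have "p ` {b-w<..b+w} \<subseteq> {b-w<..b+w}"
  proof
    fix x assume "x \<in> p ` {b-w<..b+w}"
    then obtain j where j: "j \<in> {b-w<..b+w}" "x = p j" by auto
    show "x \<in> {b-w<..b+w}"
    proof (cases "j \<le> b")
      case True then show ?thesis using M[of j] pbw1[of j] j by auto
    next
      case False then show ?thesis using A[of j] pbw2[of j] j wb by auto
    qed
  qed
  then show "p ` {b-w<..b+w} = {b-w<..b+w}"
  proof (rule card_subset_eq[rotated])
    show "finite {b-w<..b+w}" by simp
    show "card (p ` {b-w<..b+w}) = card {b-w<..b+w}"
      by (rule card_image[OF inj_on_subset[OF pinj]]) auto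
  qed
qed

lemma fb_sep:
  assumes "fb b" "fb b'" "b < b'"
  shows "b + 2 * w \<le> b'"
proof (rule ccontr)
  assume nt: "\<not> b + 2 * w \<le> b'"
  define j where "j = max (b' - w + 1) (b + 1)"
  have wb': "w \<le> b'" using fb_props(1)[OF assms(2)] .
  have "b < j" "j \<le> b + w" using w1 nt wb' unfolding j_def by auto
  then have "p j \<le> b" using fb_props(5)[OF assms(1)] by auto
  moreover have "b' - w < j" "j \<le> b'" using assms(3) wb' w1 unfolding j_def by auto
  then have "b' < p j" using fb_props(6)[OF assms(2)] by auto
  ultimately show False using assms(3) by simp
qed

lemma fb_uniq:
  assumes "fb b" "fb b'" "b < i + w" "i < b + w" "b' < i + w" "i < b' + w"
  shows "b = b'"
proof (rule ccontr)
  assume "b \<noteq> b'"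
  then have "b < b' \<or> b' < b" by auto
  then show False
  proof
    assume "b < b'" then show False using fb_sep[OF assms(1,2)] assms by simp
  next
    assume "b' < b" then show False using fb_sep[OF assms(2,1)] assms by simp
  qed
qed


definition ph :: "nat \<Rightarrow> nat" where
  "ph i = (if \<exists>b. fb b \<and> b < i + w \<and> i < b + w \<and> odd b then 1 else 0)"

definition bnd :: "nat \<Rightarrow> bool" where
  "bnd i = (\<exists>b. fb b \<and> (i + w = b \<or> i = b + w))"

definition act :: "nat \<Rightarrow> nat \<Rightarrow> bool" where
  "act t i = (1 \<le> i \<and> i < n \<and> even (i + t + ph i) \<and> \<not> bnd i)"

lemma ph_cong:
  assumes "\<And>b. fb b \<Longrightarrow> (b < i + w \<and> i < b + w) = (b < j + w \<and> j < b + w)"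
  shows "ph i = ph j"
proof -
  have "(\<exists>b. fb b \<and> b < i + w \<and> i < b + w \<and> odd b) = (\<exists>b. fb b \<and> b < j + w \<and> j < b + w \<and> odd b)"
    using assms by blast
  then show ?thesis unfolding ph_def by simp
qed

lemma ph_eq: "\<not> bnd i \<Longrightarrow> \<not> bnd (Suc i) \<Longrightarrow> ph i = ph (Suc i)"
proof (rule ph_cong)
  fix b assume nb: "\<not> bnd i" "\<not> bnd (Suc i)" and f: "fb b"
  have "i + w \<noteq> b" "Suc i \<noteq> b + w" using nb f unfolding bnd_def by auto
  then show "(b < i + w \<and> i < b + w) = (b < Suc i + w \<and> Suc i < b + w)" by auto
qed

lemma act_rng': "act t i \<Longrightarrow> 1 \<le> i \<and> i < n"
  unfolding act_def by auto

lemma act_adj': "act t i \<Longrightarrow> \<not> act t (Suc i)"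
proof
  assume a: "act t i" "act t (Suc i)"
  then have "ph i = ph (Suc i)" using ph_eq unfolding act_def by auto
  then show False using a unfolding act_def by auto
qed

sublocale oets n act p
  by unfold_locales (use act_rng' act_adj' pperm in auto)

lemma fire_nbnd: "fire t i \<Longrightarrow> \<not> bnd i \<and> 1 \<le> i"
  unfolding fire_def act_def by auto

lemma reg_inv:
  assumes f: "fb b"
  shows "(j \<le> b - w \<longrightarrow> st t j \<le> b - w) \<and> (b - w < j \<and> j \<le> b + w \<longrightarrow> b - w < st t j \<and> st t j \<le> b + w)
    \<and> (b + w < j \<longrightarrow> b + w < st t j)"
proof (induction t arbitrary: j)
  case 0
  have wb: "w \<le> b" using fb_props(1)[OF f] .
  have r1: "p j \<le> b - w" if "j \<le> b - w" for j
  proof (cases "j = 0")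
    case True then show ?thesis using pout[of 0] by simp
  next
    case False
    then have "j \<in> {1..b-w}" using that by auto
    then have "p j \<in> p ` {1..b-w}" by blast
    then show ?thesis using fb_props(3)[OF f] by auto
  qed
  have r2: "b - w < p j \<and> p j \<le> b + w" if "b - w < j \<and> j \<le> b + w" for j
  proof -
    have "p j \<in> p ` {b-w<..b+w}" using that by auto
    then show ?thesis using fb_props(4)[OF f] by auto
  qed
  have r3: "b + w < p j" if "b + w < j" for j
  proof (cases "j \<le> n")
    case False then show ?thesis using pout[of j] that by auto
  next
    case True
    then have "p j \<in> {1..n}" using pin[of j] that by auto
    have "\<not> p j \<le> b + w"
    proof
      assume "p j \<le> b + w"
      then have "p j \<in> p ` {1..b-w} \<or> p j \<in> p ` {b-w<..b+w}"
        using fb_props(3,4)[OF f] \<open>p j \<in> {1..n}\<close> by auto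
      then have "p j \<in> p ` ({1..b-w} \<union> {b-w<..b+w})" by (simp add: image_Un)
      then obtain j' where j': "p j = p j'" "j' \<in> {1..b-w} \<union> {b-w<..b+w}" by (rule imageE)
      then have "j' = j" using injD[OF pinj] by metis
      then show False using j' that by auto
    qed
    then show ?thesis by simp
  qed
  show ?case using r1 r2 r3 by simp
next
  case (Suc t)
  have wb: "w \<le> b" using fb_props(1)[OF f] .
  define s where "s = swapf (fire t) j"
  have st: "st (Suc t) j = st t s" unfolding s_def st_Suc' by simp
  have bn: "\<not> bnd i" if "fire t i" for i using fire_nbnd[OF that] by simp
  have "(j \<le> b - w \<longrightarrow> s \<le> b - w) \<and> (b - w < j \<and> j \<le> b + w \<longrightarrow> b - w < s \<and> s \<le> b + w)
    \<and> (b + w < j \<longrightarrow> b + w < s)"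
  proof (cases "1 \<le> j \<and> fire t (j - 1)")
    case True
    then have "s = j - 1" unfolding s_def swapf_def by simp
    moreover have "j - 1 + w \<noteq> b" "j - 1 \<noteq> b + w" using bn[of "j-1"] True f unfolding bnd_def by auto
    ultimately show ?thesis using True wb by auto
  next
    case False
    show ?thesis
    proof (cases "fire t j")
      case True
      then have "s = Suc j" unfolding s_def swapf_def if_not_P[OF False] if_P[OF True] by simp
      moreover have "j + w \<noteq> b" "j \<noteq> b + w" using bn[of j] True f unfolding bnd_def by auto
      ultimately show ?thesis using wb by auto
    next
      case F2: False
      then have "s = j" unfolding s_def swapf_def if_not_P[OF False] if_not_P[OF F2] by simp
      then show ?thesis by simp
    qed
  qed
  then show ?case using Suc.IH[of s] unfolding st by auto
qed

lemma hact:
  assumes c: "c < n" and i: "1 \<le> i" and gt: "c < st t i" and le: "st t (Suc i) \<le> c"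
    and ev: "even (i + t + ph c)"
  shows "act t i"
proof -
  have sin: "Suc i \<le> n"
  proof (rule ccontr)
    assume "\<not> Suc i \<le> n"
    then have "st t (Suc i) = Suc i" using permutes_not_in[OF st_perm] by simp
    then show False using le c \<open>\<not> Suc i \<le> n\<close> by simp
  qed
  have nb: "\<not> bnd i"
  proof
    assume "bnd i"
    then obtain b where f: "fb b" and ib: "i + w = b \<or> i = b + w" unfolding bnd_def by auto
    have wb: "w \<le> b" using fb_props(1)[OF f] .
    note R = reg_inv[OF f, of _ t]
    show False using ib
    proof
      assume "i + w = b"
      then have "st t i \<le> b - w" "b - w < st t (Suc i)" using R[of i] R[of "Suc i"] wb by auto
      then show False using gt le by simp
    next
      assume "i = b + w"
      then have "st t i \<le> b + w" "b + w < st t (Suc i)" using R[of i] R[of "Suc i"] wb i by auto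
      then show False using gt le by simp
    qed
  qed
  have "ph i = ph c"
  proof (rule ph_cong)
    fix b assume f: "fb b"
    have wb: "w \<le> b" using fb_props(1)[OF f] .
    note R = reg_inv[OF f, of _ t]
    have nb': "i + w \<noteq> b" "i \<noteq> b + w" using nb f unfolding bnd_def by auto
    show "(b < i + w \<and> i < b + w) = (b < c + w \<and> c < b + w)"
    proof
      assume "b < i + w \<and> i < b + w"
      then have "b - w < st t i \<and> st t i \<le> b + w" "b - w < st t (Suc i) \<and> st t (Suc i) \<le> b + w"
        using R[of i] R[of "Suc i"] wb by auto
      then show "b < c + w \<and> c < b + w" using gt le by auto
    next
      assume cb: "b < c + w \<and> c < b + w"
      show "b < i + w \<and> i < b + w"
      proof (rule ccontr)
        assume "\<not> (b < i + w \<and> i < b + w)"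
        then have "i \<le> b - w \<or> b + w < i" using nb' wb by auto
        then show False
        proof
          assume "i \<le> b - w"
          then have "st t i \<le> b - w" using R[of i] by auto
          then show False using gt cb by auto
        next
          assume "b + w < i"
          then have "b + w < st t (Suc i)" using R[of "Suc i"] by auto
          then show False using le cb by auto
        qed
      qed
    qed
  qed
  then show ?thesis unfolding act_def using i sin nb ev by auto
qed

end



context bwp
begin

lemma pinj_on: "inj_on p A"
  by (rule inj_on_subset[OF pinj]) simp

lemma count_nat:
  assumes c: "c < n" and k1: "1 \<le> k" and kw: "k \<le> w"
  shows "k \<le> card {i. c + 1 - k \<le> i \<and> i \<le> c + w \<and> 1 \<le> i \<and> c < p i}"
proof -
  define a where "a = c + 1 - k"
  define I where "I = {i. a \<le> i \<and> i \<le> c + w \<and> 1 \<le> i}"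
  define Z where "Z = {i\<in>I. p i \<le> c}"
  define On where "On = {i\<in>I. c < p i}"
  define Z' where "Z' = {i. 1 \<le> i \<and> i \<le> c - k \<and> p i \<le> c}"
  define O' where "O' = {i. 1 \<le> i \<and> i \<le> c - k \<and> c < p i}"
  have fI: "finite I" unfolding I_def by (rule finite_subset[of _ "{..c+w}"]) auto
  have cI: "card I = card Z + card On"
  proof -
    have "I = Z \<union> On" "Z \<inter> On = {}" unfolding Z_def On_def by auto
    then show ?thesis using fI by (metis card_Un_disjoint finite_Un)
  qed
  have fZ': "finite (Z' \<union> O')" unfolding Z'_def O'_def by (rule finite_subset[of _ "{..c}"]) auto
  have cZO': "card Z' + card O' = c - k"
  proof -
    have "Z' \<union> O' = {1..c-k}" "Z' \<inter> O' = {}" unfolding Z'_def O'_def by auto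
    then show ?thesis using fZ' by (metis card_Un_disjoint card_atLeastAtMost diff_Suc_1 finite_Un)
  qed
  have cO': "card O' \<le> (c - k + w) - c"
  proof -
    have "p ` O' \<subseteq> {c<..c-k+w}"
    proof
      fix x assume "x \<in> p ` O'"
      then obtain i where i: "i \<in> O'" "x = p i" by auto
      then show "x \<in> {c<..c-k+w}" using pbw1[of i] unfolding O'_def by auto
    qed
    then have "card O' \<le> card {c<..c-k+w}"
      by (rule inj_card_le[OF pinj_on]) auto
    then show ?thesis by simp
  qed
  have pos: "1 \<le> p i" if "1 \<le> i" "p i \<le> c" for i
  proof (cases "i \<le> n")
    case True then show ?thesis using pin[of i] that by auto
  next
    case False then show ?thesis using pout[of i] that c by auto
  qed
  have cZZ: "card Z + card Z' \<le> c"
  proof -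
    have d: "Z \<inter> Z' = {}" unfolding Z_def Z'_def I_def a_def by auto
    have fZ: "finite Z" using fI unfolding Z_def by simp
    have fZ'': "finite Z'" using fZ' by simp
    have "p ` (Z \<union> Z') \<subseteq> {1..c}"
    proof
      fix x assume "x \<in> p ` (Z \<union> Z')"
      then obtain i where i: "i \<in> Z \<union> Z'" "x = p i" by auto
      then show "x \<in> {1..c}" using pos[of i] unfolding Z_def Z'_def I_def by auto
    qed
    then have "card (Z \<union> Z') \<le> card {1..c}"
      by (rule inj_card_le[OF pinj_on]) auto
    then show ?thesis using card_Un_disjoint[OF fZ fZ'' d] by simp
  qed
  have cardI: "card I = (if k \<le> c then w + k else c + w)"
  proof (cases "k \<le> c")
    case True
    then have "I = {a..c+w}" unfolding I_def a_def by auto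
    then show ?thesis using True kw unfolding a_def by simp
  next
    case False
    then have "I = {1..c+w}" unfolding I_def a_def by auto
    then show ?thesis using False by simp
  qed
  have "k \<le> card On"
  proof (cases "k \<le> c")
    case True
    then show ?thesis using cI cZO' cO' cZZ cardI kw by simp
  next
    case False
    then show ?thesis using cI cZZ cardI kw by simp
  qed
  moreover have "On = {i. c + 1 - k \<le> i \<and> i \<le> c + w \<and> 1 \<le> i \<and> c < p i}"
    unfolding On_def I_def a_def by auto
  ultimately show ?thesis by simp
qed

lemma count0:
  assumes c: "c < n" and k1: "1 \<le> k" and kw: "k \<le> w"
  shows "int k \<le> cnt (img c 0) (int c + int w) (int c + 1 - int k)"
proof -
  define S where "S = {i. c + 1 - k \<le> i \<and> i \<le> c + w \<and> 1 \<le> i \<and> c < p i}"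
  have fS: "finite S" unfolding S_def by (rule finite_subset[of _ "{..c+w}"]) auto
  have sub: "int ` S \<subseteq> {int c + 1 - int k..int c + int w} \<inter> {j. img c 0 j}"
    unfolding S_def img_def by auto
  have "cnt (img c 0) (int c + int w) (int c + 1 - int k)
      = int (card ({int c + 1 - int k..int c + int w} \<inter> {j. img c 0 j}))"
    unfolding cnt_def of_bool_def[symmetric] by simp
  moreover have "card (int ` S) \<le> card ({int c + 1 - int k..int c + int w} \<inter> {j. img c 0 j})"
    by (rule card_mono[OF _ sub]) simp
  moreover have "card (int ` S) = card S" by (simp add: card_image)
  moreover have "k \<le> card S" using count_nat[OF assms] unfolding S_def .
  ultimately show ?thesis by linarith
qed


lemma ph_fb: "fb c \<Longrightarrow> ph c = (if odd c then 1 else 0)"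
proof -
  assume f: "fb c"
  have "(\<exists>b. fb b \<and> b < c + w \<and> c < b + w \<and> odd b) = odd c"
  proof
    assume "\<exists>b. fb b \<and> b < c + w \<and> c < b + w \<and> odd b"
    then obtain b where b: "fb b" "b < c + w" "c < b + w" "odd b" by auto
    have "b = c" by (rule fb_uniq[OF b(1) f b(2) b(3)]) (use w1 in auto)
    then show "odd c" using b by simp
  next
    assume "odd c" then show "\<exists>b. fb b \<and> b < c + w \<and> c < b + w \<and> odd b" using f w1 by auto
  qed
  then show ?thesis unfolding ph_def by simp
qed

theorem sorts: "st (2 * w - 1) = id"
proof (rule sorted_crit)
  fix c j assume c: "c < n" and cj: "c < j" and jn: "j \<le> n"
  define T where "T = 2 * w - 1"
  define al where "al = even (c + ph c)"
  define base where "base k = (if al then int c + 2 - 2 * int k else if k = 1 then int c + 1 else int c + 3 - 2 * int k)" for k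
  define R where "R = int c + int w"
  have actv: "ifire t i" if ev: "even (i + int t + int (ph c))" and im: "img c t i" and nim: "\<not> img c t (i+1)" for t i
  proof -
    define m where "m = nat i"
    have i1: "1 \<le> i" and gt: "c < st t m" using im unfolding img_def m_def by auto
    have im': "i = int m" using i1 unfolding m_def by simp
    have "nat (i + 1) = Suc m" using im' by simp
    then have le: "st t (Suc m) \<le> c" using nim i1 unfolding img_def by auto
    have "even (int (m + t + ph c))" using ev im' by simp
    then have "even (m + t + ph c)" by presburger
    then have "act t m" using hact[OF c _ gt le] i1 im' by simp
    then have "fire t m" using gt le unfolding fire_def by simp
    then show ?thesis unfolding ifire_def m_def using i1 by simp
  qed
  have ones0: "img c 0 jj" if "R < jj" for jj
  proof -
    have "1 \<le> jj" using that unfolding R_def by simp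
    moreover have "nat jj \<le> p (nat jj) + w" by (rule pbw2)
    moreover have "c + w < nat jj" using that unfolding R_def by simp
    ultimately show ?thesis unfolding img_def by simp
  qed
  have nfb: "\<not> fb c" if "\<not> al" using that ph_fb unfolding al_def by auto
  have H3: "int k \<le> cnt (img c 0) R (min (R + 1 - int k) (base k))" if k: "1 \<le> k" "k \<le> w" for k
  proof (cases "\<not> al \<and> k = 1")
    case True
    then have mn: "min (R + 1 - int k) (base k) = int c + 1" unfolding base_def R_def using w1 by auto
    have "\<not> fb c" using nfb True by simp
    then have "\<exists>jj. int c + 1 \<le> jj \<and> jj \<le> R \<and> img c 0 jj"
    proof (cases "c + w \<le> n")
      case True
      then obtain j0 where "c < j0" "j0 \<le> c + w" "c < p j0" using \<open>\<not> fb c\<close> unfolding fb_def by auto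
      then show ?thesis unfolding img_def R_def by (intro exI[of _ "int j0"]) auto
    next
      case False
      then have "p (c + w) = c + w" using pout[of "c+w"] by auto
      moreover have "nat (int c + int w) = c + w" by simp
      ultimately show ?thesis unfolding img_def R_def using w1 by (intro exI[of _ "int (c + w)"]) auto
    qed
    then obtain jj where "int c + 1 \<le> jj" "jj \<le> R" "img c 0 jj" by auto
    then have "1 \<le> cnt (img c 0) R (int c + 1)" by (rule cnt_pos)
    then show ?thesis using mn True by simp
  next
    case False
    then have "base k \<le> int c + 1 - int k" unfolding base_def using k by auto
    then have "min (R + 1 - int k) (base k) \<le> int c + 1 - int k" by simp
    then have "cnt (img c 0) R (int c + 1 - int k) \<le> cnt (img c 0) R (min (R + 1 - int k) (base k))"
      by (rule cnt_anti)
    then show ?thesis using count0[OF c k] unfolding R_def by simp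
  qed
  have G: "\<forall>k. 1 \<le> k \<longrightarrow> k \<le> w \<longrightarrow> int k \<le> cnt (img c T) R (min (R + 1 - int k) (base k + int T))"
  proof (rule gate[where F = ifire and \<phi> = "int (ph c)"])
    show "\<And>t i. ifire t i \<Longrightarrow> \<not> ifire t (i + 1)" by (rule ifire_adj)
    show "\<And>t j. img c (Suc t) j = (if ifire t (j - 1) then img c t (j - 1) else if ifire t j then img c t (j + 1) else img c t j)"
      by (rule img_dyn)
    show "\<And>t i. ifire t i \<Longrightarrow> img c t (i + 1) \<Longrightarrow> img c t i" by (rule img_no01)
    show "\<And>t i. even (i + int t + int (ph c)) \<Longrightarrow> img c t i \<Longrightarrow> \<not> img c t (i + 1) \<Longrightarrow> ifire t i"
      by (rule actv)
    show "\<And>j. R < j \<Longrightarrow> img c 0 j" by (rule ones0)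
    show "\<And>k. 1 \<le> k \<Longrightarrow> k \<le> w \<Longrightarrow> even (base k + int (ph c))"
    proof -
      fix k :: nat
      have "ph c \<le> 1" unfolding ph_def by auto
      then show "even (base k + int (ph c))" unfolding base_def al_def by (cases "ph c") auto
    qed
    show "\<And>k. 2 \<le> k \<Longrightarrow> k \<le> w \<Longrightarrow> base k + 2 \<le> base (k - 1)"
      unfolding base_def by auto
    show "\<And>k. 1 \<le> k \<Longrightarrow> k \<le> w \<Longrightarrow> int k \<le> cnt (img c 0) R (min (R + 1 - int k) (base k))"
      by (rule H3)
  qed
  have "int c + 1 \<le> base w + int T" unfolding base_def T_def using w1 by auto
  then have "min (R + 1 - int w) (base w + int T) = R + 1 - int w" unfolding R_def by simp
  then have full: "int w \<le> cnt (img c T) R (R + 1 - int w)" using G w1 by auto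
  have "img c T (int j)"
  proof (cases "j \<le> c + w")
    case True
    show ?thesis by (rule cnt_full[OF full]) (use True cj in \<open>auto simp: R_def\<close>)
  next
    case False
    show ?thesis
    proof (rule gate_ones[where F = ifire and R = R])
      show "\<And>t i. ifire t i \<Longrightarrow> \<not> ifire t (i + 1)" by (rule ifire_adj)
      show "\<And>t j. img c (Suc t) j = (if ifire t (j - 1) then img c t (j - 1) else if ifire t j then img c t (j + 1) else img c t j)"
        by (rule img_dyn)
      show "\<And>t i. ifire t i \<Longrightarrow> img c t (i + 1) \<Longrightarrow> img c t i" by (rule img_no01)
      show "\<And>j. R < j \<Longrightarrow> img c 0 j" by (rule ones0)
      show "R < int j" using False unfolding R_def by simp
    qed
  qed
  then show "c < st (2 * w - 1) j" unfolding img_def T_def by simp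
qed

end



lemma foldr_comp_id: "foldr (\<circ>) xs g = foldr (\<circ>) xs id \<circ> g"
  by (induction xs) (auto simp: o_assoc)

lemma bw_move: "has_bandwidth n w q \<Longrightarrow> \<bar>int (q i) - int i\<bar> \<le> int w"
  unfolding has_bandwidth_def
  by (cases "i \<in> {1..n}") (auto simp: permutes_not_in)

lemma foldr_cons_app: "foldr (\<circ>) (q # qs) id i = q (foldr (\<circ>) qs id i)"
  by simp

lemma foldr_cons: "foldr (\<circ>) (q # qs) id = q \<circ> foldr (\<circ>) qs id"
  by (simp add: fun_eq_iff)

lemma prod_move: "\<forall>q\<in>set qs. has_bandwidth n 1 q \<Longrightarrow> \<bar>int (foldr (\<circ>) qs id i) - int i\<bar> \<le> int (length qs)"
proof (induction qs arbitrary: i)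
  case Nil then show ?case by simp
next
  case (Cons q qs)
  have a: "\<bar>int (q (foldr (\<circ>) qs id i)) - int (foldr (\<circ>) qs id i)\<bar> \<le> 1"
    using bw_move[of n 1 q] Cons.prems by auto
  have b: "\<bar>int (foldr (\<circ>) qs id i) - int i\<bar> \<le> int (length qs)"
    by (rule Cons.IH) (use Cons.prems in simp)
  have "length (q # qs) = Suc (length qs)" by simp
  then show ?case unfolding foldr_cons_app using a b by arith
qed

lemma prod_perm: "\<forall>q\<in>set qs. has_bandwidth n 1 q \<Longrightarrow> foldr (\<circ>) qs id permutes {1..n}"
proof (induction qs)
  case Nil then show ?case using permutes_id[of "{1..n}"] by (simp add: id_def)
next
  case (Cons q qs)
  have "q permutes {1..n}" using Cons.prems unfolding has_bandwidth_def by auto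
  moreover have "foldr (\<circ>) qs id permutes {1..n}" by (rule Cons.IH) (use Cons.prems in simp)
  ultimately show ?case unfolding foldr_cons by (rule permutes_compose[rotated])
qed

lemma nocons:
  fixes C :: "int set"
  assumes "finite C" "C \<subseteq> {lo..hi}" "\<And>c. c \<in> C \<Longrightarrow> c + 1 \<notin> C" "lo \<le> hi + 2"
  shows "2 * int (card C) \<le> hi - lo + 2"
proof -
  let ?D = "(\<lambda>c. c + 1) ` C"
  have "card ?D = card C" by (rule card_image) (auto simp: inj_on_def)
  moreover have "C \<inter> ?D = {}" using assms(3) by auto
  moreover have "C \<union> ?D \<subseteq> {lo..hi+1}" using assms(2) by auto
  then have "card (C \<union> ?D) \<le> card {lo..hi+1}" by (rule card_mono[rotated]) simp
  ultimately have "card C + card C \<le> card {lo..hi+1}" using assms(1) card_Un_disjoint[of C ?D] by simp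
  then show ?thesis using assms(4) by simp
qed

lemma sig_A: "sigma_w w x = v \<Longrightarrow> 1 \<le> v \<Longrightarrow> v \<le> w \<Longrightarrow> x = w + v"
  unfolding sigma_w_def by (auto split: if_splits)

lemma sig_B: "sigma_w w x = v \<Longrightarrow> w < v \<Longrightarrow> v \<le> 2 * w \<Longrightarrow> x + w = v"
  unfolding sigma_w_def by (auto split: if_splits)

lemma sig_invol: "sigma_w w (sigma_w w i) = i"
  unfolding sigma_w_def by auto

lemma sig_bw: "2 * w \<le> n \<Longrightarrow> has_bandwidth n w (sigma_w w)"
proof -
  assume n: "2 * w \<le> n"
  have "sigma_w w permutes {1..n}"
  proof (rule inj_imp_permutes)
    show "inj_on (sigma_w w) {1..n}" by (metis inj_onI sig_invol)
    show "finite {1..n}" by simp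
    show "sigma_w w x \<in> {1..n}" if "x \<in> {1..n}" for x using that n unfolding sigma_w_def by auto
    show "sigma_w w x = x" if "x \<notin> {1..n}" for x using that n unfolding sigma_w_def by auto
  qed
  moreover have "\<bar>int (sigma_w w i) - int i\<bar> \<le> int w" for i unfolding sigma_w_def by auto
  ultimately show ?thesis unfolding has_bandwidth_def by auto
qed


locale lb =
  fixes n w :: nat and ps :: "(nat \<Rightarrow> nat) list"
  assumes w1: "1 \<le> w" and n2: "2 * w \<le> n" and bws: "\<forall>q\<in>set ps. has_bandwidth n 1 q"
    and sig: "sigma_w w = foldr (\<circ>) ps id"
begin

definition Q :: "nat \<Rightarrow> nat \<Rightarrow> nat" where "Q t = foldr (\<circ>) (take t ps) id"
definition Rs :: "nat \<Rightarrow> nat \<Rightarrow> nat" where "Rs t = foldr (\<circ>) (drop t ps) id"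

lemma QR: "sigma_w w = Q t \<circ> Rs t"
proof -
  have "foldr (\<circ>) ps id = foldr (\<circ>) (take t ps @ drop t ps) id" by simp
  also have "\<dots> = foldr (\<circ>) (take t ps) (foldr (\<circ>) (drop t ps) id)" by (rule foldr_append)
  also have "\<dots> = Q t \<circ> Rs t" unfolding Q_def Rs_def by (rule foldr_comp_id)
  finally show ?thesis using sig by simp
qed

lemma Q_Suc: "t < length ps \<Longrightarrow> Q (Suc t) i = Q t ((ps ! t) i)"
proof -
  assume t: "t < length ps"
  have "foldr (\<circ>) (take (Suc t) ps) id = foldr (\<circ>) (take t ps @ [ps ! t]) id"
    using t by (simp add: take_Suc_conv_app_nth)
  also have "\<dots> = foldr (\<circ>) (take t ps) (foldr (\<circ>) [ps ! t] id)" by (rule foldr_append)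
  also have "\<dots> = Q t \<circ> foldr (\<circ>) [ps ! t] id" unfolding Q_def by (rule foldr_comp_id)
  finally show ?thesis unfolding Q_def by simp
qed

lemma set_take_sub: "\<forall>q\<in>set (take t ps). has_bandwidth n 1 q"
  using bws by (meson in_set_takeD)

lemma set_drop_sub: "\<forall>q\<in>set (drop t ps). has_bandwidth n 1 q"
  using bws by (meson in_set_dropD)

lemma Q_move: "\<bar>int (Q t i) - int i\<bar> \<le> int t"
proof -
  have "\<bar>int (Q t i) - int i\<bar> \<le> int (length (take t ps))"
    unfolding Q_def by (rule prod_move[OF set_take_sub])
  then show ?thesis by simp
qed

lemma R_move: "\<bar>int (Rs t i) - int i\<bar> \<le> int (length ps - t)"
proof -
  have "\<bar>int (Rs t i) - int i\<bar> \<le> int (length (drop t ps))"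
    unfolding Rs_def by (rule prod_move[OF set_drop_sub])
  then show ?thesis by simp
qed

lemma Q_perm: "Q t permutes {1..n}"
  unfolding Q_def by (rule prod_perm[OF set_take_sub])

lemma R_perm: "Rs t permutes {1..n}"
  unfolding Rs_def by (rule prod_perm[OF set_drop_sub])

definition P :: "nat \<Rightarrow> (nat \<times> nat) set" where
  "P t = {(i, j). i \<in> {1..n} \<and> j \<in> {1..n} \<and> j < i \<and> Q t i \<le> w \<and> w < Q t j \<and> Q t j \<le> 2 * w}"

definition I :: "nat \<Rightarrow> nat" where "I t = card (P t)"

lemma finP: "finite (P t)"
  by (rule finite_subset[of _ "{1..n} \<times> {1..n}"]) (auto simp: P_def)

lemma I0: "I 0 = 0"
proof -
  have "Q 0 = id" unfolding Q_def by simp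
  then have "P 0 = {}" unfolding P_def by auto
  then show ?thesis unfolding I_def by simp
qed

lemma IK: "I (length ps) = w * w"
proof -
  have "Q (length ps) = sigma_w w" unfolding Q_def using sig by simp
  then have "P (length ps) = {w<..2*w} \<times> {1..w}"
    unfolding P_def using n2 by (auto simp: sigma_w_def split: if_splits)
  then show ?thesis unfolding I_def by simp
qed

lemma step:
  assumes t: "t < length ps"
  shows "I (Suc t) \<le> I t + (t + 1)" "I (Suc t) \<le> I t + (length ps - t)"
proof -
  define q where "q = ps ! t"
  have qbw: "has_bandwidth n 1 q" unfolding q_def using bws t by simp
  have qperm: "q permutes {1..n}" using qbw unfolding has_bandwidth_def by simp
  have qm: "\<bar>int (q i) - int i\<bar> \<le> 1" for i using bw_move[OF qbw] by simp
  have qinj: "inj q" using permutes_inj[OF qperm] .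
  have QS: "Q (Suc t) i = Q t (q i)" for i unfolding q_def using Q_Suc[OF t] .
  define X where "X = {(i, j) \<in> P (Suc t). q j < q i}"
  define Y where "Y = {(i, j) \<in> P (Suc t). \<not> q j < q i}"
  define C where "C = {c \<in> {1..n}. q c = Suc c \<and> q (Suc c) = c \<and> Q t c \<le> w \<and> w < Q t (Suc c) \<and> Q t (Suc c) \<le> 2 * w}"
  have fX: "finite X" "finite Y"
    by (rule finite_subset[OF _ finP[of "Suc t"]], auto simp: X_def Y_def)+
  have PXY: "P (Suc t) = X \<union> Y" unfolding X_def Y_def by auto
  have cX: "card X \<le> I t"
  proof -
    have ij1: "inj_on (\<lambda>(i, j). (q i, q j)) X" using qinj by (auto simp: inj_on_def inj_def)
    have ij2: "(\<lambda>(i, j). (q i, q j)) ` X \<subseteq> P t"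
    proof
      fix x assume "x \<in> (\<lambda>(i, j). (q i, q j)) ` X"
      then obtain i j where ij: "(i, j) \<in> X" "x = (q i, q j)" by auto
      then have "i \<in> {1..n}" "j \<in> {1..n}" unfolding X_def P_def by auto
      then have "q i \<in> {1..n}" "q j \<in> {1..n}" using permutes_in_image[OF qperm] by auto
      then show "x \<in> P t" using ij unfolding X_def P_def QS by auto
    qed
    have "card ((\<lambda>(i, j). (q i, q j)) ` X) \<le> card (P t)" by (rule card_mono[OF finP ij2])
    moreover have "card ((\<lambda>(i, j). (q i, q j)) ` X) = card X" by (rule card_image[OF ij1])
    ultimately show ?thesis unfolding I_def by simp
  qed
  have cY: "card Y \<le> card C"
  proof -
    have key: "i = Suc j \<and> q i = j \<and> q j = Suc j" if "(i, j) \<in> Y" for i j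
    proof -
      have a: "j < i" "\<not> q j < q i" using that unfolding Y_def P_def by auto
      have "q i \<noteq> q j" using a(1) qinj by (metis injD less_irrefl)
      then show ?thesis using a qm[of i] qm[of j] by arith
    qed
    have "inj_on snd Y"
    proof (rule inj_onI)
      fix x y assume "x \<in> Y" "y \<in> Y" "snd x = snd y"
      then show "x = y" using key[of "fst x" "snd x"] key[of "fst y" "snd y"] by (cases x, cases y) auto
    qed
    moreover have "snd ` Y \<subseteq> C"
    proof
      fix x assume "x \<in> snd ` Y"
      then obtain i j where ij: "(i, j) \<in> Y" "x = j" by auto
      then show "x \<in> C" using key[OF ij(1)] unfolding Y_def P_def C_def QS by auto
    qed
    moreover have "finite C" unfolding C_def by simp
    ultimately show ?thesis using card_mono card_image by metis
  qed
  have Cprops: "int w - int t \<le> int c \<and> int c \<le> int w + int t \<and>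
      int w + 1 - int (length ps - t) \<le> int c \<and> int c \<le> int w + int (length ps - t) - 1" if "c \<in> C" for c
  proof -
    have c: "c \<in> {1..n}" "q c = Suc c" "Q t c \<le> w" "w < Q t (Suc c)" "Q t (Suc c) \<le> 2 * w"
      using that unfolding C_def by auto
    have sc: "Suc c \<in> {1..n}" using permutes_in_image[OF qperm, of c] c by simp
    have a1: "1 \<le> Q t c" using permutes_in_image[OF Q_perm[of t], of c] c by simp
    have f1: "\<bar>int (Q t c) - int c\<bar> \<le> int t" by (rule Q_move)
    have f2: "\<bar>int (Q t (Suc c)) - int (Suc c)\<bar> \<le> int t" by (rule Q_move)
    obtain x where x: "Rs t x = c" using permutes_surj[OF R_perm[of t]] by (metis surjD)
    obtain y where y: "Rs t y = Suc c" using permutes_surj[OF R_perm[of t]] by (metis surjD)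
    have "sigma_w w x = Q t c" using QR[of t] x by (simp add: fun_eq_iff)
    then have xv: "x = w + Q t c" using sig_A a1 c(3) by blast
    have "sigma_w w y = Q t (Suc c)" using QR[of t] y by (simp add: fun_eq_iff)
    then have yv: "y + w = Q t (Suc c)" using sig_B c(4,5) by blast
    have b1: "\<bar>int (Rs t x) - int x\<bar> \<le> int (length ps - t)" by (rule R_move)
    have b2: "\<bar>int (Rs t y) - int y\<bar> \<le> int (length ps - t)" by (rule R_move)
    show ?thesis using f1 f2 b1 b2 x y xv yv c a1 by auto
  qed
  have nc: "c + 1 \<notin> int ` C" if cin: "c \<in> int ` C" for c
  proof
    assume c1in: "c + 1 \<in> int ` C"
    obtain c1 where c1: "c1 \<in> C" "c = int c1" using cin by auto
    obtain c2 where c2: "c2 \<in> C" "c + 1 = int c2" using c1in by auto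
    have "int c2 = int c1 + 1" using c1 c2 by simp
    note this c1(1) c2(1)
    then have "c2 = Suc c1" "q (Suc c1) = c1" "q c2 = Suc c2" unfolding C_def by auto
    then show False by simp
  qed
  have fC: "finite (int ` C)" unfolding C_def by simp
  have cC: "card (int ` C) = card C" by (simp add: card_image)
  have "2 * int (card (int ` C)) \<le> (int w + int t) - (int w - int t) + 2"
    by (rule nocons[OF fC]) (use Cprops nc in auto)
  then have C1: "card C \<le> t + 1" using cC by simp
  have "2 * int (card (int ` C)) \<le> (int w + int (length ps - t) - 1) - (int w + 1 - int (length ps - t)) + 2"
    by (rule nocons[OF fC]) (use Cprops nc t in auto)
  then have C2: "card C \<le> length ps - t" using cC by simp
  have "I (Suc t) \<le> card X + card Y" unfolding I_def PXY by (rule card_Un_le)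
  then show "I (Suc t) \<le> I t + (t + 1)" "I (Suc t) \<le> I t + (length ps - t)"
    using cX cY C1 C2 by auto
qed

lemma fwd: "t \<le> length ps \<Longrightarrow> 2 * I t \<le> t * (t + 1)"
proof (induction t)
  case 0 then show ?case using I0 by simp
next
  case (Suc t)
  then have "I (Suc t) \<le> I t + (t + 1)" using step(1)[of t] by simp
  then show ?case using Suc by (simp add: algebra_simps)
qed

lemma bwd: "\<forall>t. length ps - t = d \<longrightarrow> t \<le> length ps \<longrightarrow> 2 * I (length ps) \<le> 2 * I t + d * (d + 1)"
proof (induction d)
  case 0 then show ?case by auto
next
  case (Suc d)
  show ?case
  proof (intro allI impI)
    fix t assume a: "length ps - t = Suc d" "t \<le> length ps"
    then have t: "t < length ps" by simp
    have "2 * I (length ps) \<le> 2 * I (Suc t) + d * (d + 1)" using Suc.IH a by auto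
    moreover have "I (Suc t) \<le> I t + Suc d" using step(2)[OF t] a by simp
    ultimately show "2 * I (length ps) \<le> 2 * I t + Suc d * (Suc d + 1)"
      by (simp add: algebra_simps)
  qed
qed

theorem lower: "2 * w - 1 \<le> length ps"
proof (rule ccontr)
  assume "\<not> 2 * w - 1 \<le> length ps"
  then have K: "length ps + 2 \<le> 2 * w" by simp
  show False
  proof (cases "length ps < w")
    case True
    have "2 * I (length ps) \<le> length ps * (length ps + 1)" using fwd by simp
    moreover have "length ps * (length ps + 1) \<le> (w - 1) * w"
      by (rule mult_mono) (use True in auto)
    moreover have "(w - 1) * w < w * w + w * w"
    proof -
      have "(w - 1) * w \<le> w * w" by simp
      moreover have "0 < w * w" using w1 by simp
      ultimately show ?thesis by linarith
    qed
    ultimately show False using IK by simp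
  next
    case False
    define t where "t = w - 1"
    have tK: "t \<le> length ps" using False unfolding t_def by simp
    have a: "2 * I t \<le> (w - 1) * w" using fwd[OF tK] w1 unfolding t_def by simp
    define M where "M = (length ps - t) * (length ps - t + 1)"
    have b: "2 * I (length ps) \<le> 2 * I t + M" using bwd tK unfolding M_def by blast
    have c: "M \<le> (w - 1) * w" unfolding M_def
      by (rule mult_mono) (use K w1 in \<open>auto simp: t_def\<close>)
    have d: "(w - 1) * w < w * w" using w1 by simp
    show False using IK a b c d by linarith
  qed
qed

end

theorem corollary1p2:
  fixes w :: nat
  assumes "w \<ge> 1"
  shows "(\<forall>n p. has_bandwidth n w p \<longrightarrow> prod_bw1_atmost n (2 * w - 1) p)
       \<and> (\<forall>n. n \<ge> 2 * w \<longrightarrow>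
            has_bandwidth n w (sigma_w w) \<and>
            \<not> (\<exists>k < 2 * w - 1. prod_bw1_atmost n k (sigma_w w)))"
proof
  show "\<forall>n p. has_bandwidth n w p \<longrightarrow> prod_bw1_atmost n (2 * w - 1) p"
  proof (intro allI impI)
    fix n p assume h: "has_bandwidth n w p"
    interpret bwp n w p
      by unfold_locales (use h assms in \<open>auto simp: has_bandwidth_def\<close>)
    show "prod_bw1_atmost n (2 * w - 1) p" by (rule st_id_prod[OF sorts])
  qed
next
  show "\<forall>n. n \<ge> 2 * w \<longrightarrow> has_bandwidth n w (sigma_w w) \<and>
            \<not> (\<exists>k < 2 * w - 1. prod_bw1_atmost n k (sigma_w w))"
  proof (intro allI impI conjI)
    fix n assume n2: "2 * w \<le> n"
    show "has_bandwidth n w (sigma_w w)" by (rule sig_bw[OF n2])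
    show "\<not> (\<exists>k < 2 * w - 1. prod_bw1_atmost n k (sigma_w w))"
    proof
      assume "\<exists>k < 2 * w - 1. prod_bw1_atmost n k (sigma_w w)"
      then obtain k ps where k: "k < 2 * w - 1" "length ps \<le> k"
        "\<forall>q\<in>set ps. has_bandwidth n 1 q" "sigma_w w = foldr (\<circ>) ps id"
        unfolding prod_bw1_atmost_def by blast
      interpret lb n w ps
        by unfold_locales (use k assms n2 in auto)
      show False using lower k by simp
    qed
  qed
qed

end
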